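(* Let $R$ be an integral domain, let $\delta,\gamma,p,q\in R$ with $2\gamma=p\delta$, and let $a=\mathcal{W}(\delta,\gamma,p,q)$. Then $L^{(-1,p)}(a)=a$, i.e. for all $n\ge0$ $$a_n=\sum_{i=0}^n\binom{n}{i}(-1)^ip^{n-i}a_i,$$ and consequently, for all $n\ge1$, $$\sum_{i=0}^{n-1}\binom{n}{i}(-1)^ip^{n-i}a_i=\begin{cases}0,& n \text{ even},\\ 2a_n,& n\text{ odd}.\end{cases}$$
   Context: $\mathcal{W}(\delta,\gamma,p,q)$ denotes the sequence $(a_n)_{n\ge0}$ with $a_0=\delta$, $a_1=\gamma$, $a_n=pa_{n-1}-qa_{n-2}$ for $n\ge2$. For $h,y\in R$, $L^{(h,y)}(a)$ is the sequence with $n$-th term $\sum_{i=0}^n\binom{n}{i}h^iy^{n-i}a_i$. *)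

theory Defs
  imports Main
begin

fun W :: "'a::comm_ring_1 \<Rightarrow> 'a \<Rightarrow> 'a \<Rightarrow> 'a \<Rightarrow> nat \<Rightarrow> 'a" where
  "W d g p q 0 = d"
| "W d g p q (Suc 0) = g"
| "W d g p q (Suc (Suc n)) = p * W d g p q (Suc n) - q * W d g p q n"

definition L :: "'a::comm_ring_1 \<Rightarrow> 'a \<Rightarrow> (nat \<Rightarrow> 'a) \<Rightarrow> nat \<Rightarrow> 'a" where
  "L h y a n = (\<Sum>i=0..n. of_nat (n choose i) * h ^ i * y ^ (n - i) * a i)"

end

theory Submission
  imports Defs
begin

definition Dop :: "'a::comm_ring_1 \<Rightarrow> (nat \<Rightarrow> 'a) \<Rightarrow> nat \<Rightarrow> 'a" where
  "Dop p f = (\<lambda>k. p * f k - f (Suc k))"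

lemma Dsum:
  fixes p :: "'a::comm_ring_1"
  shows "(Dop p ^^ n) f k = (\<Sum>i\<le>n. of_nat (n choose i) * (-1) ^ i * p ^ (n - i) * f (k + i))"
proof (induction n arbitrary: k)
  case 0
  then show ?case by simp
next
  case (Suc n)
  have "(Dop p ^^ Suc n) f k = p * (Dop p ^^ n) f k - (Dop p ^^ n) f (Suc k)"
    by (simp add: Dop_def)
  also have "\<dots> = (\<Sum>i\<le>n. of_nat (n choose i) * (-1) ^ i * p ^ (Suc n - i) * f (k + i))
      - (\<Sum>i\<le>n. of_nat (n choose i) * (-1) ^ i * p ^ (n - i) * f (Suc k + i))"
    unfolding Suc.IH sum_distrib_left
    by (intro arg_cong2[where f="(-)"] sum.cong refl)
       (auto simp: Suc_diff_le algebra_simps)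
  also have "\<dots> = (\<Sum>i\<le>Suc n. of_nat (Suc n choose i) * (-1) ^ i * p ^ (Suc n - i) * f (k + i))"
  proof -
    have A: "(\<Sum>i\<le>Suc n. of_nat (Suc n choose i) * (-1) ^ i * p ^ (Suc n - i) * f (k + i))
      = of_nat (Suc n choose 0) * (-1) ^ 0 * p ^ (Suc n - 0) * f (k + 0) +
        (\<Sum>i\<le>n. of_nat (Suc n choose Suc i) * (-1) ^ Suc i * p ^ (Suc n - Suc i) * f (k + Suc i))"
      by (rule sum.atMost_Suc_shift)
    have B: "(\<Sum>i\<le>n. of_nat (Suc n choose Suc i) * (-1) ^ Suc i * p ^ (Suc n - Suc i) * f (k + Suc i))
      = (\<Sum>i\<le>n. of_nat (n choose i) * (-1) ^ Suc i * p ^ (n - i) * f (Suc k + i))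
      + (\<Sum>i\<le>n. of_nat (n choose Suc i) * (-1) ^ Suc i * p ^ (n - i) * f (k + Suc i))"
      by (simp add: sum.distrib[symmetric] algebra_simps)
    have C: "(\<Sum>i\<le>n. of_nat (n choose i) * (-1) ^ i * p ^ (Suc n - i) * f (k + i))
      = of_nat (n choose 0) * (-1) ^ 0 * p ^ (Suc n - 0) * f (k + 0) +
        (\<Sum>i<n. of_nat (n choose Suc i) * (-1) ^ Suc i * p ^ (Suc n - Suc i) * f (k + Suc i))"
      by (cases n) (simp, simp only: sum.atMost_Suc_shift lessThan_Suc_atMost)
    have D: "(\<Sum>i\<le>n. of_nat (n choose Suc i) * (-1) ^ Suc i * p ^ (n - i) * f (k + Suc i))
      = (\<Sum>i<n. of_nat (n choose Suc i) * (-1) ^ Suc i * p ^ (Suc n - Suc i) * f (k + Suc i))"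
      by (simp add: lessThan_Suc_atMost[symmetric] binomial_eq_0)
    have E: "(\<Sum>i\<le>n. of_nat (n choose i) * (-1) ^ Suc i * p ^ (n - i) * f (Suc k + i))
      = - (\<Sum>i\<le>n. of_nat (n choose i) * (-1) ^ i * p ^ (n - i) * f (Suc k + i))"
      by (simp add: sum_negf[symmetric])
    show ?thesis unfolding A B C D E by simp
  qed
  finally show ?case .
qed

lemma DR:
  fixes p q :: "'a::comm_ring_1"
  shows "Dop p (Dop p g) k = p * Dop p g k - q * g k + (g (Suc (Suc k)) - p * g (Suc k) + q * g k)"
  by (simp add: Dop_def algebra_simps)

lemma Dzero:
  fixes p :: "'a::comm_ring_1"
  assumes "\<And>k. g (Suc (Suc k)) = p * g (Suc k) - q * g k"
  shows "Dop p g (Suc (Suc k)) = p * Dop p g (Suc k) - q * Dop p g k"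
proof -
  have e1: "g (Suc (Suc k)) = p * g (Suc k) - q * g k" by (rule assms)
  have e2: "g (Suc (Suc (Suc k))) = p * g (Suc (Suc k)) - q * g (Suc k)" by (rule assms)
  show ?thesis unfolding Dop_def by (simp only: e2 e1) (simp add: algebra_simps)
qed

lemma Dpow_rec:
  fixes p :: "'a::comm_ring_1"
  assumes "\<And>k. g (Suc (Suc k)) = p * g (Suc k) - q * g k"
  shows "\<And>k. (Dop p ^^ n) g (Suc (Suc k)) = p * (Dop p ^^ n) g (Suc k) - q * (Dop p ^^ n) g k"
proof (induction n)
  case 0 then show ?case using assms by simp
next
  case (Suc n) then show ?case using Dzero[of "(Dop p ^^ n) g" p q k] by simp
qed

lemma Wrec: "W d g p q (Suc (Suc k)) = p * W d g p q (Suc k) - q * W d g p q k"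
  by simp

lemma main_eq:
  fixes \<delta> \<gamma> p q :: "'a::comm_ring_1"
  assumes "2 * \<gamma> = p * \<delta>"
  shows "(Dop p ^^ n) (W \<delta> \<gamma> p q) 0 = W \<delta> \<gamma> p q n"
proof -
  let ?a = "W \<delta> \<gamma> p q"
  have "(Dop p ^^ n) ?a 0 = ?a n \<and> (Dop p ^^ Suc n) ?a 0 = ?a (Suc n)"
  proof (induction n)
    case 0
    then show ?case using assms by (simp add: Dop_def mult_2 algebra_simps)
  next
    case (Suc n)
    have "(Dop p ^^ Suc (Suc n)) ?a 0 = Dop p (Dop p ((Dop p ^^ n) ?a)) 0" by simp
    also have "\<dots> = p * (Dop p ^^ Suc n) ?a 0 - q * (Dop p ^^ n) ?a 0"
      using DR[of p "(Dop p ^^ n) ?a" 0 q] Dpow_rec[of ?a p q n 0] Wrec by simp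
    finally show ?case using Suc by simp
  qed
  then show ?thesis by simp
qed

theorem mainTheorem8:
  fixes \<delta> \<gamma> p q :: "'a::idom"
  assumes "2 * \<gamma> = p * \<delta>"
  defines "a \<equiv> W \<delta> \<gamma> p q"
  shows "L (-1) p a = a
    \<and> (\<forall>n. a n = (\<Sum>i=0..n. of_nat (n choose i) * (-1) ^ i * p ^ (n - i) * a i))
    \<and> (\<forall>n\<ge>1. (\<Sum>i=0..n-1. of_nat (n choose i) * (-1) ^ i * p ^ (n - i) * a i)
                 = (if even n then 0 else 2 * a n))"
proof -
  have key: "a n = (\<Sum>i=0..n. of_nat (n choose i) * (-1) ^ i * p ^ (n - i) * a i)" for n
  proof -
    have "a n = (Dop p ^^ n) a 0" unfolding a_def by (rule main_eq[OF assms(1), symmetric])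
    also have "\<dots> = (\<Sum>i\<le>n. of_nat (n choose i) * (-1) ^ i * p ^ (n - i) * a (0 + i))"
      by (rule Dsum)
    finally show ?thesis by (simp only: atLeast0AtMost add_0)
  qed
  have third: "(\<Sum>i=0..n-1. of_nat (n choose i) * (-1) ^ i * p ^ (n - i) * a i)
                 = (if even n then 0 else 2 * a n)" if n1: "n \<ge> 1" for n
  proof -
    obtain m where m: "n = Suc m" using n1 by (cases n) auto
    have "a n = (\<Sum>i=0..n-1. of_nat (n choose i) * (-1) ^ i * p ^ (n - i) * a i) + (-1)^n * a n"
    proof -
      have "(\<Sum>i=0..n. of_nat (n choose i) * (-1) ^ i * p ^ (n - i) * a i)
        = (\<Sum>i=0..n-1. of_nat (n choose i) * (-1) ^ i * p ^ (n - i) * a i) + (-1)^n * a n"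
        unfolding m by (simp add: sum.atLeast0_atMost_Suc)
      then show ?thesis using key[of n] by (rule trans[rotated])
    qed
    then have h: "(\<Sum>i=0..n-1. of_nat (n choose i) * (-1) ^ i * p ^ (n - i) * a i) = a n - (-1)^n * a n"
      by (metis add_diff_cancel_right')
    show ?thesis
    proof (cases "even n")
      case True
      have "(-1::'a)^n = 1" using True by (rule neg_one_even_power)
      then show ?thesis unfolding h using True by (simp only: if_True mult_1 diff_self)
    next
      case False
      have "(-1::'a)^n = -1" using False by (rule neg_one_odd_power)
      then have "a n - (-1)^n * a n = 2 * a n" by (simp only: mult_minus_left mult_1 diff_minus_eq_add mult_2)
      then show ?thesis unfolding h using False by (simp only: if_False)
    qed
  qed
  have Lf: "L (-1) p a = a" unfolding L_def by (rule ext, rule key[symmetric])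
  show ?thesis
    apply (intro conjI allI impI)
      apply (rule Lf)
     apply (rule key)
    apply (erule third)
    done
qed

end
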